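(* Let $\Psi$ be a Lévy–Khintchine function with Lévy measure $\pi$, parameters $\gamma$ and $\lambda=-\Psi(0)$, and let $\Phi(z)=\max(\gamma,0)z+\int_{(1,\infty)}(1-e^{-zu})\pi(\mathrm du)+\lambda$. Let $\hat\Sigma(x)=\hat{\mathrm a}x^2+dx+\int_0^\infty(e^{-ux}-1+ux)\eta(\mathrm du)$ ($\hat{\mathrm a},d\ge0$, $\int(u\wedge u^2)\eta(\mathrm du)<\infty$) with $\int_1^\infty\frac{\mathrm du}{\hat\Sigma(u)}<\infty$. In each of the following cases $\overline\theta_{\Phi,\hat\Sigma}=\underline\theta_{\Phi,\hat\Sigma}=:\theta$ and: (1) if $\lambda>0$, then $\theta=\lambda/\hat{\mathrm a}$ if $\hat{\mathrm a}>0$ and $\theta=\infty$ if $\hat{\mathrm a}=0$; (2) if $\lambda=0$ and $\hat{\mathrm a}>0$, then $\theta=0$.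
   Context: A Lévy–Khintchine function is $\Psi(x)=\mathrm a x^2-\gamma x-\lambda+\int_0^\infty(e^{-ux}-1+ux\mathbf 1_{(0,1]}(u))\pi(\mathrm du)$, $x\ge0$, with $\mathrm a\ge0,\gamma\in\mathbb R,\lambda\ge0$, $\int(1\wedge u^2)\pi(\mathrm du)<\infty$. For $\hat\Sigma$ as in the claim, the scale function $\hat W:[0,\infty)\to[0,\infty)$ is the continuous increasing function with $\hat W(0)=0$ and $\int_0^\infty e^{-xz}\hat W(z)\mathrm dz=1/\hat\Sigma(x)$, $x>0$. Define $\overline\theta_{\Phi,\hat\Sigma}=\limsup_{x\to\infty}x\int_0^\infty e^{-zx}\frac{\Phi(z)\hat W(z)}{z}\mathrm dz$ and $\underline\theta_{\Phi,\hat\Sigma}$ the same with $\liminf$ (values in $[0,\infty]$). *)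

theory Defs
  imports "HOL-Analysis.Analysis"
begin

definition Phi_fun :: "real \<Rightarrow> real measure \<Rightarrow> real \<Rightarrow> real \<Rightarrow> real" where
  "Phi_fun gam \<mu> lam z =
     max gam 0 * z + (LINT u:{1<..}|\<mu>. (1 - exp (- (z * u)))) + lam"

definition Sigma_fun :: "real \<Rightarrow> real \<Rightarrow> real measure \<Rightarrow> real \<Rightarrow> real" where
  "Sigma_fun ah d \<eta> x =
     ah * x\<^sup>2 + d * x + (LINT u:{0<..}|\<eta>. (exp (- (u * x)) - 1 + u * x))"

definition is_scale_function :: "(real \<Rightarrow> real) \<Rightarrow> (real \<Rightarrow> real) \<Rightarrow> bool" where
  "is_scale_function \<Sigma> W \<longleftrightarrow>
     continuous_on {0..} W \<and> mono_on {0..} W \<and> (\<forall>z\<ge>0. W z \<ge> 0) \<and> W 0 = 0 \<and>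
     (\<forall>x>0. (\<integral>\<^sup>+ z\<in>{0..}. ennreal (exp (- (x * z)) * W z) \<partial>lborel) = ennreal (1 / \<Sigma> x))"

definition theta_integral :: "(real \<Rightarrow> real) \<Rightarrow> (real \<Rightarrow> real) \<Rightarrow> real \<Rightarrow> ennreal" where
  "theta_integral \<Phi> W x =
     ennreal x * (\<integral>\<^sup>+ z\<in>{0<..}. ennreal (exp (- (z * x)) * \<Phi> z * W z / z) \<partial>lborel)"

definition theta_upper :: "(real \<Rightarrow> real) \<Rightarrow> (real \<Rightarrow> real) \<Rightarrow> ennreal" where
  "theta_upper \<Phi> W = Limsup at_top (theta_integral \<Phi> W)"

definition theta_lower :: "(real \<Rightarrow> real) \<Rightarrow> (real \<Rightarrow> real) \<Rightarrow> ennreal" where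
  "theta_lower \<Phi> W = Liminf at_top (theta_integral \<Phi> W)"

end

theory Submission
  imports Defs
begin

definition gg :: "real \<Rightarrow> real" where "gg t = exp (- t) - 1 + t"

lemma gg_nonneg: "0 \<le> gg t"
  unfolding gg_def using exp_ge_add_one_self[of "-t"] by simp

lemma gg_pos: "t > 0 \<Longrightarrow> 0 < gg t"
  unfolding gg_def by (smt (verit, best) exp_minus_greater)

lemma gg_le_lin: "t \<ge> 0 \<Longrightarrow> gg t \<le> t"
  unfolding gg_def by simp

lemma gg_le_quad: "t \<ge> 0 \<Longrightarrow> gg t \<le> t\<^sup>2 / 2"
proof -
  assume t: "t \<ge> 0"
  let ?f = "\<lambda>t::real. t\<^sup>2/2 - t + 1 - exp (-t)"
  have "?f 0 \<le> ?f t"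
  proof (rule DERIV_nonneg_imp_nondecreasing[OF t])
    fix x :: real assume x: "0 \<le> x" "x \<le> t"
    show "\<exists>y. DERIV ?f x :> y \<and> 0 \<le> y"
      using exp_ge_add_one_self[of "-x"] by (intro exI[of _ "x - 1 + exp (-x)"]) (auto intro!: derivative_eq_intros)
  qed
  then show ?thesis by (simp add: gg_def)
qed

lemma nn_top_Ici: "(\<integral>\<^sup>+ u\<in>{(1::real)..}. (\<infinity>::ennreal) \<partial>lborel) = \<infinity>"
proof -
  have "(\<integral>\<^sup>+ u\<in>{(1::real)..2}. (\<infinity>::ennreal) \<partial>lborel) \<le> (\<integral>\<^sup>+ u\<in>{(1::real)..}. (\<infinity>::ennreal) \<partial>lborel)"
    by (intro nn_integral_mono) (auto split: split_indicator)
  moreover have "(\<integral>\<^sup>+ u\<in>{(1::real)..2}. (\<infinity>::ennreal) \<partial>lborel) = \<infinity>"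
    by (simp add: nn_integral_cmult_indicator)
  ultimately show ?thesis by (simp add: top_unique)
qed


lemma nn_exp_tail:
  fixes a c :: real assumes "a > 0"
  shows "(\<integral>\<^sup>+ y\<in>{c..}. ennreal (exp (- (a * y))) \<partial>lborel) = ennreal (exp (- (a * c)) / a)"
proof -
  have "((\<lambda>y. exp (- (a * y))) has_integral exp (- (a * c)) / a) {c..}"
    using has_integral_exp_minus_to_infinity[OF assms, of c] by simp
  from nn_integral_has_integral_lebesgue'[OF _ this] show ?thesis by simp
qed

lemma nn_inv_sq_tail:
  fixes c x :: real assumes "c > 0" "x > 0"
  shows "(\<integral>\<^sup>+ y\<in>{x..}. ennreal (1 / (c * y\<^sup>2)) \<partial>lborel) = ennreal (1 / (c * x))"
proof -
  have "((\<lambda>y. 1 / y ^ 2) has_integral 1 / x) {x..}"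
    using has_integral_inverse_power_to_inf[of 2 x] assms by simp
  then have "((\<lambda>y. 1 / y ^ 2 * (1/c)) has_integral 1 / x * (1/c)) {x..}"
    by (rule has_integral_mult_left)
  then have "((\<lambda>y. 1 / (c * y\<^sup>2)) has_integral 1 / (c * x)) {x..}"
    by (simp add: field_simps)
  from nn_integral_has_integral_lebesgue'[OF _ this] show ?thesis using assms by simp
qed


context
  fixes \<eta> :: "real measure" and ah d :: real
  assumes eta_sets: "sets \<eta> = sets borel"
    and eta_int: "(\<integral>\<^sup>+ u\<in>{0<..}. ennreal (min u (u\<^sup>2)) \<partial>\<eta>) < \<infinity>"
    and ah: "ah \<ge> 0" and d: "d \<ge> 0"
begin

lemma meas_eta: "f \<in> borel_measurable borel \<Longrightarrow> f \<in> borel_measurable \<eta>"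
  using measurable_cong_sets[OF eta_sets refl] by blast

definition GG :: "real \<Rightarrow> real" where
  "GG y = (LINT u:{0<..}|\<eta>. (exp (- (u * y)) - 1 + u * y))"

lemma Sigma_eq: "Sigma_fun ah d \<eta> y = ah * y\<^sup>2 + d * y + GG y"
  unfolding Sigma_fun_def GG_def by simp

lemma int_w: "integrable \<eta> (\<lambda>u. indicator {0<..} u * min u (u\<^sup>2))"
proof (rule integrableI_bounded)
  show "(\<lambda>u. indicator {0<..} u * min u (u\<^sup>2)) \<in> borel_measurable \<eta>"
    by (intro meas_eta) measurable
  have "(\<integral>\<^sup>+ u. ennreal (norm (indicator {0<..} u * min u (u\<^sup>2))) \<partial>\<eta>)
      = (\<integral>\<^sup>+ u\<in>{0<..}. ennreal (min u (u\<^sup>2)) \<partial>\<eta>)"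
    by (intro nn_integral_cong) (auto split: split_indicator)
  then show "(\<integral>\<^sup>+ u. ennreal (norm (indicator {0<..} u * min u (u\<^sup>2))) \<partial>\<eta>) < \<infinity>"
    using eta_int by simp
qed

lemma gg_bound: 
  assumes "u > 0" "y \<ge> 0"
  shows "gg (u * y) \<le> (y + y\<^sup>2) * min u (u\<^sup>2)"
proof (cases "u \<le> 1")
  case True
  then have m: "min u (u\<^sup>2) = u\<^sup>2" using assms by (simp add: power2_eq_square mult_le_cancel_left1)
  have "gg (u*y) \<le> (u*y)\<^sup>2/2" using gg_le_quad assms by simp
  also have "\<dots> \<le> (y + y\<^sup>2) * u\<^sup>2" using assms by (simp add: power_mult_distrib algebra_simps)
  finally show ?thesis using m by simp
next
  case False
  then have m: "min u (u\<^sup>2) = u" using assms by (simp add: power2_eq_square)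
  have "gg (u*y) \<le> u*y" using gg_le_lin assms by simp
  also have "\<dots> \<le> (y + y\<^sup>2) * u" using assms by (simp add: algebra_simps)
  finally show ?thesis using m by simp
qed

lemma int_gg: 
  assumes "y \<ge> 0"
  shows "integrable \<eta> (\<lambda>u. indicator {0<..} u * gg (u * y))"
proof (rule Bochner_Integration.integrable_bound)
  show "integrable \<eta> (\<lambda>u. (y + y\<^sup>2) * (indicator {0<..} u * min u (u\<^sup>2)))"
    using int_w by simp
  show "(\<lambda>u. indicator {0<..} u * gg (u * y)) \<in> borel_measurable \<eta>"
    by (intro meas_eta) (simp add: gg_def, measurable)
  show "AE u in \<eta>. norm (indicator {0<..} u * gg (u * y)) \<le> norm ((y + y\<^sup>2) * (indicator {0<..} u * min u (u\<^sup>2)))"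
    using gg_bound[of _ y] gg_nonneg assms by (auto split: split_indicator)
qed

lemma GG_eq: "GG y = integral\<^sup>L \<eta> (\<lambda>u. indicator {0<..} u * gg (u * y))"
  unfolding GG_def gg_def set_lebesgue_integral_def by simp

lemma GG_nonneg: "0 \<le> GG y"
  unfolding GG_eq using gg_nonneg by (intro integral_nonneg_AE) auto

lemma Sigma_ge: "y \<ge> 0 \<Longrightarrow> ah * y\<^sup>2 \<le> Sigma_fun ah d \<eta> y"
  using GG_nonneg[of y] d by (simp add: Sigma_eq)

lemma Sigma_nonneg: "y \<ge> 0 \<Longrightarrow> 0 \<le> Sigma_fun ah d \<eta> y"
  using Sigma_ge[of y] ah by (smt (verit) zero_le_mult_iff zero_le_power2)

lemma GG_lim: "((\<lambda>y. GG y / y\<^sup>2) \<longlongrightarrow> 0) at_top"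
proof -
  have "((\<lambda>t. integral\<^sup>L \<eta> (\<lambda>u. indicator {0<..} u * gg (u * t) / t\<^sup>2)) \<longlongrightarrow> integral\<^sup>L \<eta> (\<lambda>u. 0)) at_top"
  proof (rule integral_dominated_convergence_at_top[where w="\<lambda>u. indicator {0<..} u * min u (u\<^sup>2)"])
    show "(\<lambda>u. 0::real) \<in> borel_measurable \<eta>" by simp
    show "(\<lambda>u. indicator {0<..} u * gg (u * t) / t\<^sup>2) \<in> borel_measurable \<eta>" for t
      by (intro meas_eta) (simp add: gg_def, measurable)
    show "integrable \<eta> (\<lambda>u. indicator {0<..} u * min u (u\<^sup>2))" by (rule int_w)
    show "AE u in \<eta>. ((\<lambda>t. indicator {0<..} u * gg (u * t) / t\<^sup>2) \<longlongrightarrow> 0) at_top"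
    proof (intro AE_I2)
      fix u :: real
      show "((\<lambda>t. indicator {0<..} u * gg (u * t) / t\<^sup>2) \<longlongrightarrow> 0) at_top"
      proof (cases "u > 0")
        case False then show ?thesis by simp
      next
        case True
        have l: "((\<lambda>t. u / t) \<longlongrightarrow> 0) at_top" by real_asymp
        have e1: "\<forall>\<^sub>F t in at_top. 0 \<le> indicator {0<..} u * gg (u * t) / t\<^sup>2"
          using gg_nonneg by auto
        have e2: "\<forall>\<^sub>F t in at_top. indicator {0<..} u * gg (u * t) / t\<^sup>2 \<le> u / t"
        proof (intro eventually_at_top_linorderI[of 1])
          fix t :: real assume t: "t \<ge> 1"
          have "gg (u * t) \<le> u * t" using gg_le_lin True t by simp
          then have "gg (u * t) / t\<^sup>2 \<le> u * t / t\<^sup>2" using t by (simp add: divide_right_mono)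
          also have "\<dots> = u / t" using t by (simp add: power2_eq_square)
          finally show "indicator {0<..} u * gg (u * t) / t\<^sup>2 \<le> u / t" using True by simp
        qed
        show ?thesis by (rule tendsto_sandwich[OF e1 e2 tendsto_const l])
      qed
    qed
    show "\<forall>\<^sub>F t in at_top. AE u in \<eta>. norm (indicator {0<..} u * gg (u * t) / t\<^sup>2) \<le> indicator {0<..} u * min u (u\<^sup>2)"
    proof (intro eventually_at_top_linorderI[of 1] AE_I2)
      fix t u :: real assume t: "t \<ge> 1"
      show "norm (indicator {0<..} u * gg (u * t) / t\<^sup>2) \<le> indicator {0<..} u * min u (u\<^sup>2)"
      proof (cases "u > 0")
        case False then show ?thesis by simp
      next
        case True
        have t2: "t\<^sup>2 \<ge> 1" using t by (simp add: one_le_power)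
        have a: "gg (u * t) / t\<^sup>2 \<le> u"
        proof -
          have "gg (u * t) \<le> u * t" using gg_le_lin True t by simp
          also have "\<dots> \<le> u * t\<^sup>2" using True t by (simp add: power2_eq_square)
          finally show ?thesis using t by (simp add: divide_le_eq)
        qed
        have b: "gg (u * t) / t\<^sup>2 \<le> u\<^sup>2"
        proof -
          have "gg (u * t) \<le> (u * t)\<^sup>2 / 2" using gg_le_quad True t by simp
          also have "\<dots> \<le> u\<^sup>2 * t\<^sup>2" by (simp add: power_mult_distrib)
          finally show ?thesis using t by (simp add: divide_le_eq)
        qed
        show ?thesis using a b True gg_nonneg[of "u*t"] by simp
      qed
    qed
  qed
  then show ?thesis by (simp add: GG_eq)
qed

lemma Sigma_upper_ev:
  assumes "e > 0"
  shows "\<forall>\<^sub>F y in at_top. Sigma_fun ah d \<eta> y \<le> (ah + e) * y\<^sup>2"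
proof -
  have "((\<lambda>y. ah + d / y + GG y / y\<^sup>2) \<longlongrightarrow> ah + 0 + 0) at_top"
  proof -
    have "((\<lambda>y. d / y) \<longlongrightarrow> 0) at_top" by real_asymp
    then show ?thesis by (intro tendsto_intros GG_lim)
  qed
  then have "\<forall>\<^sub>F y in at_top. ah + d / y + GG y / y\<^sup>2 < ah + e"
    using assms by (intro order_tendstoD) auto
  then show ?thesis
  proof (rule eventually_mono[OF eventually_conj[OF _ eventually_gt_at_top[of 0]]])
    fix y :: real assume "ah + d / y + GG y / y\<^sup>2 < ah + e \<and> 0 < y"
    then have h: "ah + d / y + GG y / y\<^sup>2 < ah + e" and y: "y > 0" by auto
    have "(ah + d / y + GG y / y\<^sup>2) * y\<^sup>2 = Sigma_fun ah d \<eta> y"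
      using y by (simp add: Sigma_eq field_simps power2_eq_square)
    moreover have "(ah + d / y + GG y / y\<^sup>2) * y\<^sup>2 \<le> (ah + e) * y\<^sup>2"
      using h y by (intro mult_right_mono) auto
    ultimately show "Sigma_fun ah d \<eta> y \<le> (ah + e) * y\<^sup>2" by simp
  qed
qed

lemma Sigma_pos:
  assumes Sigma_int: "(\<integral>\<^sup>+ u\<in>{1..}. inverse (ennreal (Sigma_fun ah d \<eta> u)) \<partial>lborel) < \<infinity>"
    and y: "y > 0"
  shows "Sigma_fun ah d \<eta> y > 0"
proof (rule ccontr)
  assume "\<not> Sigma_fun ah d \<eta> y > 0"
  then have S0: "Sigma_fun ah d \<eta> y = 0" using Sigma_nonneg[of y] y by simp
  have "ah * y\<^sup>2 \<ge> 0" "d * y \<ge> 0" using ah d y by auto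
  moreover have "ah * y\<^sup>2 + d * y + GG y = 0" using S0 by (simp add: Sigma_eq)
  ultimately have G0: "GG y = 0" and a0: "ah * y\<^sup>2 = 0" and d0: "d * y = 0"
    using GG_nonneg[of y] by linarith+
  then have ah0: "ah = 0" and d0: "d = 0" using y by auto
  from G0 have "integral\<^sup>L \<eta> (\<lambda>u. indicator {0<..} u * gg (u * y)) = 0" by (simp add: GG_eq)
  then have "AE u in \<eta>. indicator {0<..} u * gg (u * y) = 0"
    using integral_nonneg_eq_0_iff_AE[OF int_gg[of y]] y gg_nonneg by auto
  then have AEu: "AE u in \<eta>. \<not> u > 0"
  proof (rule eventually_mono)
    fix u :: real assume "indicator {0<..} u * gg (u * y) = 0"
    then show "\<not> u > 0" using gg_pos[of "u*y"] y by (auto split: split_indicator_asm)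
  qed
  have GGz: "GG z = 0" for z
  proof -
    have "integral\<^sup>L \<eta> (\<lambda>u. indicator {0<..} u * gg (u * z)) = integral\<^sup>L \<eta> (\<lambda>u. 0)"
      by (rule integral_cong_AE) (use AEu in \<open>auto intro!: meas_eta simp: gg_def\<close>)
    then show ?thesis by (simp add: GG_eq)
  qed
  have "Sigma_fun ah d \<eta> u = 0" for u using Sigma_eq[of u] GGz[of u] ah0 d0 by simp
  then have "(\<integral>\<^sup>+ u\<in>{1..}. inverse (ennreal (Sigma_fun ah d \<eta> u)) \<partial>lborel) = \<infinity>"
    using nn_top_Ici by simp
  with Sigma_int show False by simp
qed

definition II :: "real \<Rightarrow> ennreal" where
  "II x = (\<integral>\<^sup>+ y\<in>{x..}. ennreal (1 / Sigma_fun ah d \<eta> y) \<partial>lborel)"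

lemma LL_upper:
  assumes "ah > 0" "x > 0"
  shows "ennreal x * II x \<le> ennreal (1 / ah)"
proof -
  have "II x \<le> (\<integral>\<^sup>+ y\<in>{x..}. ennreal (1 / (ah * y\<^sup>2)) \<partial>lborel)"
    unfolding II_def
  proof (intro nn_integral_mono)
    fix y :: real
    show "ennreal (1 / Sigma_fun ah d \<eta> y) * indicator {x..} y \<le> ennreal (1 / (ah * y\<^sup>2)) * indicator {x..} y"
    proof (cases "y \<ge> x")
      case True
      then have "ah * y\<^sup>2 > 0" using assms by auto
      moreover have "ah * y\<^sup>2 \<le> Sigma_fun ah d \<eta> y" using Sigma_ge True assms by auto
      ultimately have "1 / Sigma_fun ah d \<eta> y \<le> 1 / (ah * y\<^sup>2)"
        by (intro divide_left_mono) auto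
      then show ?thesis using True by (auto intro: ennreal_leI)
    qed auto
  qed
  also have "\<dots> = ennreal (1 / (ah * x))" by (rule nn_inv_sq_tail) (use assms in auto)
  finally have "ennreal x * II x \<le> ennreal x * ennreal (1 / (ah * x))" by (rule mult_left_mono) auto
  also have "\<dots> = ennreal (1 / ah)" using assms by (simp add: ennreal_mult'[symmetric])
  finally show ?thesis .
qed

lemma LL_lower:
  assumes Sigma_int: "(\<integral>\<^sup>+ u\<in>{1..}. inverse (ennreal (Sigma_fun ah d \<eta> u)) \<partial>lborel) < \<infinity>"
    and e: "e > 0"
  shows "\<forall>\<^sub>F x in at_top. ennreal (1 / (ah + e)) \<le> ennreal x * II x"
proof -
  obtain Y where Y: "\<And>y. y \<ge> Y \<Longrightarrow> Sigma_fun ah d \<eta> y \<le> (ah + e) * y\<^sup>2"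
    using Sigma_upper_ev[OF e] by (auto simp: eventually_at_top_linorder)
  show ?thesis
  proof (intro eventually_at_top_linorderI[of "max Y 1"])
    fix x :: real assume x: "x \<ge> max Y 1"
    have "ennreal (1 / ((ah + e) * x)) = (\<integral>\<^sup>+ y\<in>{x..}. ennreal (1 / ((ah + e) * y\<^sup>2)) \<partial>lborel)"
      by (rule nn_inv_sq_tail[symmetric]) (use x e ah in auto)
    also have "\<dots> \<le> II x"
      unfolding II_def
    proof (intro nn_integral_mono)
      fix y :: real
      show "ennreal (1 / ((ah + e) * y\<^sup>2)) * indicator {x..} y \<le> ennreal (1 / Sigma_fun ah d \<eta> y) * indicator {x..} y"
      proof (cases "y \<ge> x")
        case True
        then have "Sigma_fun ah d \<eta> y > 0" using x by (intro Sigma_pos[OF Sigma_int]) auto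
        moreover have "Sigma_fun ah d \<eta> y \<le> (ah + e) * y\<^sup>2" using Y True x by auto
        ultimately have "1 / ((ah + e) * y\<^sup>2) \<le> 1 / Sigma_fun ah d \<eta> y"
          by (intro divide_left_mono) auto
        then show ?thesis using True by (auto intro: ennreal_leI)
      qed auto
    qed
    finally have "ennreal x * ennreal (1 / ((ah + e) * x)) \<le> ennreal x * II x"
      by (rule mult_left_mono) auto
    moreover have "ennreal x * ennreal (1 / ((ah + e) * x)) = ennreal (1 / (ah + e))"
      using x e ah by (simp add: ennreal_mult'[symmetric])
    ultimately show "ennreal (1 / (ah + e)) \<le> ennreal x * II x" by simp
  qed
qed

lemma LL_lim_pos:
  assumes Sigma_int: "(\<integral>\<^sup>+ u\<in>{1..}. inverse (ennreal (Sigma_fun ah d \<eta> u)) \<partial>lborel) < \<infinity>"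
    and ahp: "ah > 0"
  shows "((\<lambda>x. ennreal x * II x) \<longlongrightarrow> ennreal (1 / ah)) at_top"
proof (rule order_tendstoI)
  fix a assume a: "a < ennreal (1 / ah)"
  then obtain a' where a': "a = ennreal a'" "0 \<le> a'" "a' < 1 / ah"
    by (cases a) (auto simp: ennreal_less_iff)
  define e where "e = (if a' = 0 then 1 else (1 / a' - ah) / 2)"
  have e: "e > 0" using a' ahp by (auto simp: e_def field_simps)
  have "a' < 1 / (ah + e)"
  proof (cases "a' = 0")
    case True then show ?thesis using ahp by (simp add: e_def)
  next
    case False
    then have "a' > 0" using a' by auto
    then have "ah < 1 / a'" using a' ahp by (simp add: field_simps)
    moreover have "\<And>b. ah < b \<Longrightarrow> ah + (b - ah) / 2 < b" by (simp add: field_simps)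
    ultimately have "ah + e < 1 / a'" using False unfolding e_def by simp
    then show ?thesis using \<open>a' > 0\<close> e ahp by (simp add: field_simps)
  qed
  then have "a < ennreal (1 / (ah + e))" using a' e ahp by (auto intro!: ennreal_lessI)
  with LL_lower[OF Sigma_int e] show "\<forall>\<^sub>F x in at_top. a < ennreal x * II x"
    by (auto elim: eventually_mono intro: less_le_trans)
next
  fix a assume a: "a > ennreal (1 / ah)"
  show "\<forall>\<^sub>F x in at_top. ennreal x * II x < a"
    using eventually_gt_at_top[of 0]
    by (rule eventually_mono) (use LL_upper[OF ahp] a in \<open>auto intro: le_less_trans\<close>)
qed

lemma LL_lim_zero:
  assumes Sigma_int: "(\<integral>\<^sup>+ u\<in>{1..}. inverse (ennreal (Sigma_fun ah d \<eta> u)) \<partial>lborel) < \<infinity>"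
    and ah0: "ah = 0"
  shows "((\<lambda>x. ennreal x * II x) \<longlongrightarrow> \<infinity>) at_top"
proof (rule order_tendstoI)
  fix a :: ennreal assume a: "a < \<infinity>"
  then obtain a' where a': "a = ennreal a'" "0 \<le> a'"
    by (cases a) auto
  have e: "1 / (a' + 1) > 0" using a' by simp
  have "a < ennreal (1 / (ah + 1 / (a' + 1)))" using a' ah0 by (simp add: ennreal_lessI)
  with LL_lower[OF Sigma_int e] show "\<forall>\<^sub>F x in at_top. a < ennreal x * II x"
    by (auto elim: eventually_mono intro: less_le_trans)
qed auto

end

context
  fixes S W :: "real \<Rightarrow> real"
  assumes W: "is_scale_function S W"
    and Spos: "\<And>y. y > 0 \<Longrightarrow> S y > 0"
begin

definition W0 :: "real \<Rightarrow> real" where "W0 z = indicator {0..} z * W z"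

lemma W0_meas: "W0 \<in> borel_measurable borel"
proof -
  have "continuous_on {0..} W" using W by (simp add: is_scale_function_def)
  then have "(\<lambda>x. indicator {0..} x *\<^sub>R W x) \<in> borel_measurable borel"
    by (intro borel_measurable_continuous_on_indicator) auto
  then show ?thesis unfolding W0_def by simp
qed

lemma W_nonneg: "z \<ge> 0 \<Longrightarrow> W z \<ge> 0" using W by (simp add: is_scale_function_def)
lemma W_0: "W 0 = 0" using W by (simp add: is_scale_function_def)
lemma W_mono: "0 \<le> a \<Longrightarrow> a \<le> b \<Longrightarrow> W a \<le> W b"
  using W unfolding is_scale_function_def by (auto intro: mono_onD)
lemma W0_nonneg: "W0 z \<ge> 0" using W_nonneg by (simp add: W0_def split: split_indicator)

lemma W_lap: "y > 0 \<Longrightarrow> (\<integral>\<^sup>+ z. ennreal (exp (- (y * z)) * W0 z) \<partial>lborel) = ennreal (1 / S y)"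
proof -
  assume y: "y > 0"
  have "(\<integral>\<^sup>+ z\<in>{0..}. ennreal (exp (- (y * z)) * W z) \<partial>lborel) = ennreal (1 / S y)"
    using W y by (simp add: is_scale_function_def)
  moreover have "(\<integral>\<^sup>+ z\<in>{0..}. ennreal (exp (- (y * z)) * W z) \<partial>lborel) = (\<integral>\<^sup>+ z. ennreal (exp (- (y * z)) * W0 z) \<partial>lborel)"
    by (intro nn_integral_cong) (auto simp: W0_def split: split_indicator)
  ultimately show ?thesis by simp
qed

lemma laplace_div:
  assumes x: "x > 0"
  shows "(\<integral>\<^sup>+ z\<in>{0<..}. ennreal (exp (- (z * x)) * W z / z) \<partial>lborel)
       = (\<integral>\<^sup>+ y\<in>{x..}. ennreal (1 / S y) \<partial>lborel)"
proof -
  define F where "F z y = ennreal (W0 z) * ennreal (exp (- (z * y))) * indicator {x..} y * indicator {0<..} z" for z y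
  have Fm: "case_prod F \<in> borel_measurable (lborel \<Otimes>\<^sub>M lborel)"
    unfolding F_def using W0_meas by measurable
  have "(\<integral>\<^sup>+ z\<in>{0<..}. ennreal (exp (- (z * x)) * W z / z) \<partial>lborel) = (\<integral>\<^sup>+ z. (\<integral>\<^sup>+ y. F z y \<partial>lborel) \<partial>lborel)"
  proof (intro nn_integral_cong)
    fix z :: real
    show "ennreal (exp (- (z * x)) * W z / z) * indicator {0<..} z = (\<integral>\<^sup>+ y. F z y \<partial>lborel)"
    proof (cases "z > 0")
      case True
      have "(\<integral>\<^sup>+ y. F z y \<partial>lborel) = (\<integral>\<^sup>+ y. ennreal (W0 z) * (ennreal (exp (- (z * y))) * indicator {x..} y) \<partial>lborel)"
        unfolding F_def using True by (intro nn_integral_cong) (simp add: mult.assoc)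
      also have "\<dots> = ennreal (W0 z) * (\<integral>\<^sup>+ y\<in>{x..}. ennreal (exp (- (z * y))) \<partial>lborel)"
        by (rule nn_integral_cmult) measurable
      also have "\<dots> = ennreal (W0 z) * ennreal (exp (- (z * x)) / z)"
        using nn_exp_tail[OF True, of x] by simp
      also have "\<dots> = ennreal (exp (- (z * x)) * W z / z)"
        using True W_nonneg[of z] by (simp add: W0_def ennreal_mult'[symmetric] mult.commute)
      finally show ?thesis using True by simp
    qed (simp add: F_def)
  qed
  also have "\<dots> = (\<integral>\<^sup>+ y. (\<integral>\<^sup>+ z. F z y \<partial>lborel) \<partial>lborel)"
    by (rule lborel_pair.Fubini'[OF Fm, symmetric])
  also have "\<dots> = (\<integral>\<^sup>+ y\<in>{x..}. ennreal (1 / S y) \<partial>lborel)"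
  proof (intro nn_integral_cong)
    fix y :: real
    show "(\<integral>\<^sup>+ z. F z y \<partial>lborel) = ennreal (1 / S y) * indicator {x..} y"
    proof (cases "y \<ge> x")
      case True
      then have y: "y > 0" using x by simp
      have "(\<integral>\<^sup>+ z. F z y \<partial>lborel) = (\<integral>\<^sup>+ z. ennreal (exp (- (y * z)) * W0 z) \<partial>lborel)"
        unfolding F_def using True W_0
        by (intro nn_integral_cong) (auto simp: W0_def ennreal_mult'[symmetric] mult.commute split: split_indicator)
      also have "\<dots> = ennreal (1 / S y)" by (rule W_lap[OF y])
      finally show ?thesis using True by simp
    qed (simp add: F_def)
  qed
  finally show ?thesis .
qed

lemma W_exp_bound:
  assumes z: "z \<ge> 0"
  shows "W z \<le> exp (z + 1) / S 1"
proof -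
  have "ennreal (exp (- (z + 1)) * W z) = (\<integral>\<^sup>+ t\<in>{z..z+1}. ennreal (exp (- (z + 1)) * W z) \<partial>lborel)"
    by (simp add: nn_integral_cmult_indicator)
  also have "\<dots> \<le> (\<integral>\<^sup>+ t. ennreal (exp (- (1 * t)) * W0 t) \<partial>lborel)"
  proof (intro nn_integral_mono)
    fix t :: real
    show "ennreal (exp (- (z + 1)) * W z) * indicator {z..z + 1} t \<le> ennreal (exp (- (1 * t)) * W0 t)"
    proof (cases "t \<in> {z..z+1}")
      case True
      then have "exp (- (z + 1)) \<le> exp (- (1 * t))" by simp
      moreover have "W z \<le> W t" using True z by (intro W_mono) auto
      ultimately have "exp (- (z + 1)) * W z \<le> exp (- (1 * t)) * W0 t"
        using True z W_nonneg[of z] by (auto simp: W0_def intro: mult_mono)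
      then show ?thesis using True by (auto intro: ennreal_leI)
    qed simp
  qed
  also have "\<dots> = ennreal (1 / S 1)" by (rule W_lap) simp
  finally have "exp (- (z + 1)) * W z \<le> 1 / S 1"
    using Spos[of 1] by (subst (asm) ennreal_le_iff) auto
  then have le: "(exp (- (z + 1)) * W z) * exp (z + 1) \<le> 1 / S 1 * exp (z + 1)"
    by (rule mult_right_mono) simp
  have e: "exp (- (z + 1)) * exp (z + 1) = 1" by (simp flip: exp_add)
  have "W z = W z * (exp (- (z + 1)) * exp (z + 1))" by (simp only: e mult_1_right)
  also have "\<dots> = (exp (- (z + 1)) * W z) * exp (z + 1)" by (simp only: mult_ac)
  also note le
  finally show ?thesis by simp
qed

end

context
  fixes \<mu> :: "real measure" and gam lam :: real
  assumes pi_sets: "sets \<mu> = sets borel"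
    and pi_levy: "(\<integral>\<^sup>+ u\<in>{0<..}. ennreal (min 1 (u\<^sup>2)) \<partial>\<mu>) < \<infinity>"
    and lam: "lam \<ge> 0"
begin

lemma meas_mu: "f \<in> borel_measurable borel \<Longrightarrow> f \<in> borel_measurable \<mu>"
  using measurable_cong_sets[OF pi_sets refl] by blast

lemma mu_fin: "emeasure \<mu> {1<..} < \<infinity>"
proof -
  have s: "{1<..} \<in> sets \<mu>" using pi_sets by simp
  have "emeasure \<mu> {1<..} = (\<integral>\<^sup>+ u. indicator {1<..} u \<partial>\<mu>)" using s by simp
  also have "\<dots> \<le> (\<integral>\<^sup>+ u\<in>{0<..}. ennreal (min 1 (u\<^sup>2)) \<partial>\<mu>)"
  proof (intro nn_integral_mono)
    fix u :: real
    show "indicator {1<..} u \<le> ennreal (min 1 (u\<^sup>2)) * indicator {0<..} u"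
    proof (cases "u > 1")
      case True
      then have "1 \<le> u\<^sup>2" by (simp add: one_le_power)
      then show ?thesis using True by (auto simp: min_def)
    qed auto
  qed
  finally show ?thesis using pi_levy by (simp add: le_less_trans)
qed

lemma int_ind: "integrable \<mu> (\<lambda>u. indicator {1<..} u :: real)"
  using mu_fin pi_sets by (simp add: integrable_real_indicator)

definition PP :: "real \<Rightarrow> real" where
  "PP z = integral\<^sup>L \<mu> (\<lambda>u. indicator {1<..} u * (1 - exp (- (z * u))))"

lemma Phi_eq: "Phi_fun gam \<mu> lam z = max gam 0 * z + PP z + lam"
  unfolding Phi_fun_def PP_def set_lebesgue_integral_def by simp

lemma int_P: "z \<ge> 0 \<Longrightarrow> integrable \<mu> (\<lambda>u. indicator {1<..} u * (1 - exp (- (z * u))))"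
proof (rule Bochner_Integration.integrable_bound[OF int_ind])
  show "(\<lambda>u. indicator {1<..} u * (1 - exp (- (z * u)))) \<in> borel_measurable \<mu>"
    by (intro meas_mu) measurable
  assume z: "z \<ge> 0"
  show "AE u in \<mu>. norm (indicator {1<..} u * (1 - exp (- (z * u)))) \<le> norm (indicator {1<..} u :: real)"
    using z by (auto split: split_indicator)
qed

lemma PP_nonneg: "z \<ge> 0 \<Longrightarrow> 0 \<le> PP z"
  unfolding PP_def by (intro integral_nonneg_AE) (auto split: split_indicator)

lemma PP_le: "z \<ge> 0 \<Longrightarrow> PP z \<le> measure \<mu> {1<..}"
proof -
  assume z: "z \<ge> 0"
  have "PP z \<le> integral\<^sup>L \<mu> (\<lambda>u. indicator {1<..} u :: real)"
    unfolding PP_def using z by (intro integral_mono int_P int_ind) (auto split: split_indicator)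
  also have "\<dots> = measure \<mu> {1<..}" using pi_sets by simp
  finally show ?thesis .
qed

lemma PP_lim: "(PP \<longlongrightarrow> 0) (at_right 0)"
proof -
  have "((\<lambda>t. integral\<^sup>L \<mu> (\<lambda>u. indicator {1<..} u * (1 - exp (- (inverse t * u))))) \<longlongrightarrow> integral\<^sup>L \<mu> (\<lambda>u. 0)) at_top"
  proof (rule integral_dominated_convergence_at_top[where w="\<lambda>u. indicator {1<..} u :: real"])
    show "(\<lambda>u. 0::real) \<in> borel_measurable \<mu>" by simp
    show "(\<lambda>u. indicator {1<..} u * (1 - exp (- (inverse t * u)))) \<in> borel_measurable \<mu>" for t
      by (intro meas_mu) measurable
    show "integrable \<mu> (\<lambda>u. indicator {1<..} u :: real)" by (rule int_ind)
    show "AE u in \<mu>. ((\<lambda>t. indicator {1<..} u * (1 - exp (- (inverse t * u)))) \<longlongrightarrow> 0) at_top"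
    proof (intro AE_I2)
      fix u :: real
      have "((\<lambda>t. 1 - exp (- (inverse t * u))) \<longlongrightarrow> 0) at_top" by real_asymp
      then show "((\<lambda>t. indicator {1<..} u * (1 - exp (- (inverse t * u)))) \<longlongrightarrow> 0) at_top"
        by (auto intro: tendsto_mult_right_zero)
    qed
    show "\<forall>\<^sub>F t in at_top. AE u in \<mu>. norm (indicator {1<..} u * (1 - exp (- (inverse t * u)))) \<le> indicator {1<..} u"
      by (intro eventually_at_top_linorderI[of 1] AE_I2) (auto split: split_indicator)
  qed
  then have "((\<lambda>t. PP (inverse t)) \<longlongrightarrow> 0) at_top" by (simp add: PP_def)
  then show ?thesis by (simp add: filterlim_at_top_to_right)
qed

lemma Phi_lower: "z \<ge> 0 \<Longrightarrow> lam \<le> Phi_fun gam \<mu> lam z"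
  using PP_nonneg[of z] by (simp add: Phi_eq)

lemma Phi_upper: "z \<ge> 0 \<Longrightarrow> Phi_fun gam \<mu> lam z \<le> (lam + measure \<mu> {1<..} + max gam 0) * exp z"
proof -
  assume z: "z \<ge> 0"
  have "Phi_fun gam \<mu> lam z \<le> max gam 0 * z + measure \<mu> {1<..} + lam"
    using PP_le[OF z] by (simp add: Phi_eq)
  also have "\<dots> \<le> max gam 0 * exp z + measure \<mu> {1<..} * exp z + lam * exp z"
  proof -
    have "z \<le> exp z" using exp_ge_add_one_self[of z] by linarith
    moreover have "1 \<le> exp z" using z by simp
    ultimately show ?thesis using lam z
      by (intro add_mono mult_left_mono) (auto intro: mult_left_mono[of 1 "exp z", simplified])
  qed
  finally show ?thesis by (simp add: algebra_simps)
qed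

lemma Phi_near0:
  assumes e: "e > 0"
  shows "\<exists>b>0. \<forall>z. 0 < z \<longrightarrow> z < b \<longrightarrow> Phi_fun gam \<mu> lam z \<le> lam + e"
proof -
  have "((\<lambda>z. max gam 0 * z + PP z) \<longlongrightarrow> max gam 0 * 0 + 0) (at_right 0)"
    by (intro tendsto_intros PP_lim)
  then have "\<forall>\<^sub>F z in at_right 0. max gam 0 * z + PP z < e"
    using e by (intro order_tendstoD) auto
  then obtain b where b: "b > 0" "\<And>z. 0 < z \<Longrightarrow> z < b \<Longrightarrow> max gam 0 * z + PP z < e"
    by (auto simp: eventually_at_right_field)
  show ?thesis
  proof (intro exI[of _ b] conjI allI impI)
    fix z :: real assume "0 < z" "z < b"
    then show "Phi_fun gam \<mu> lam z \<le> lam + e" using b(2)[of z] by (simp add: Phi_eq)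
  qed (rule b(1))
qed

end

context
  fixes S W \<Phi> :: "real \<Rightarrow> real" and lam C :: real
  assumes W: "is_scale_function S W"
    and Spos: "\<And>y. y > 0 \<Longrightarrow> S y > 0"
    and lam: "lam \<ge> 0"
    and Phi_low: "\<And>z. z \<ge> 0 \<Longrightarrow> lam \<le> \<Phi> z"
    and Phi_up: "\<And>z. z \<ge> 0 \<Longrightarrow> \<Phi> z \<le> C * exp z"
    and Phi_near: "\<And>e. e > 0 \<Longrightarrow> \<exists>b>0. \<forall>z. 0 < z \<longrightarrow> z < b \<longrightarrow> \<Phi> z \<le> lam + e"
begin

lemma Wn: "z \<ge> 0 \<Longrightarrow> W z \<ge> 0" using W_nonneg[OF W Spos] by blast

lemma W0_eq: "W0 W z = indicator {0..} z * W z" by (rule W0_def[OF W Spos])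

definition JJ :: "real \<Rightarrow> ennreal" where
  "JJ x = (\<integral>\<^sup>+ y\<in>{x..}. ennreal (1 / S y) \<partial>lborel)"

definition hh :: "real \<Rightarrow> real \<Rightarrow> ennreal" where
  "hh x z = ennreal (exp (- (z * x)) * W0 W z / z) * indicator {0<..} z"

lemma hh_meas: "hh x \<in> borel_measurable borel"
  unfolding hh_def using W0_meas[OF W Spos] by measurable

lemma hh_int: "x > 0 \<Longrightarrow> (\<integral>\<^sup>+ z. hh x z \<partial>lborel) = JJ x"
proof -
  assume x: "x > 0"
  have "(\<integral>\<^sup>+ z. hh x z \<partial>lborel) = (\<integral>\<^sup>+ z\<in>{0<..}. ennreal (exp (- (z * x)) * W z / z) \<partial>lborel)"
    unfolding hh_def by (intro nn_integral_cong) (auto simp: W0_eq split: split_indicator)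
  also have "\<dots> = JJ x" unfolding JJ_def by (rule laplace_div[OF W Spos x])
  finally show ?thesis .
qed

lemma theta_lower_bd:
  assumes x: "x > 0"
  shows "ennreal lam * (ennreal x * JJ x) \<le> theta_integral \<Phi> W x"
proof -
  have "ennreal lam * JJ x = (\<integral>\<^sup>+ z. ennreal lam * hh x z \<partial>lborel)"
    using hh_int[OF x] by (simp add: nn_integral_cmult hh_meas)
  also have "\<dots> \<le> (\<integral>\<^sup>+ z\<in>{0<..}. ennreal (exp (- (z * x)) * \<Phi> z * W z / z) \<partial>lborel)"
  proof (intro nn_integral_mono)
    fix z :: real
    show "ennreal lam * hh x z \<le> ennreal (exp (- (z * x)) * \<Phi> z * W z / z) * indicator {0<..} z"
    proof (cases "z > 0")
      case True
      have "lam * (exp (- (z * x)) * W z / z) \<le> \<Phi> z * (exp (- (z * x)) * W z / z)"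
        using True Phi_low[of z] Wn[of z] by (intro mult_right_mono) auto
      then have "ennreal (lam * (exp (- (z * x)) * W z / z)) \<le> ennreal (exp (- (z * x)) * \<Phi> z * W z / z)"
        by (intro ennreal_leI) (simp add: mult_ac)
      then show ?thesis using True lam Wn[of z]
        by (simp add: hh_def W0_eq ennreal_mult'[symmetric])
    qed (simp add: hh_def)
  qed
  finally have "ennreal x * (ennreal lam * JJ x) \<le> theta_integral \<Phi> W x"
    unfolding theta_integral_def by (rule mult_left_mono) simp
  then show ?thesis by (simp add: mult_ac)
qed

lemma theta_upper_bd:
  assumes e: "e > 0"
  shows "\<exists>b>0. \<forall>x>2. theta_integral \<Phi> W x \<le> ennreal (lam + e) * (ennreal x * JJ x)
             + ennreal (x * (C * exp 1 / (S 1 * b)) * (exp (- ((x - 2) * b)) / (x - 2)))"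
proof -
  obtain b where b: "b > 0" "\<And>z. 0 < z \<Longrightarrow> z < b \<Longrightarrow> \<Phi> z \<le> lam + e"
    using Phi_near[OF e] by auto
  have S1: "S 1 > 0" using Spos by simp
  define M where "M = C * exp 1 / (S 1 * b)"
  have C: "C \<ge> 0" using Phi_up[of 0] Phi_low[of 0] lam by simp
  have M: "M \<ge> 0" using C S1 b by (simp add: M_def)
  show ?thesis
  proof (intro exI[of _ b] conjI allI impI)
    show "b > 0" by (rule b)
    fix x :: real assume x: "x > 2"
    have bound: "ennreal (exp (- (z * x)) * \<Phi> z * W z / z) * indicator {0<..} z
       \<le> ennreal (lam + e) * hh x z + ennreal (M * exp (- ((x - 2) * z))) * indicator {b..} z" for z
    proof (cases "z > 0")
      case z: True
      show ?thesis
      proof (cases "z < b")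
        case True
        have "exp (- (z * x)) * \<Phi> z * W z / z \<le> (lam + e) * (exp (- (z * x)) * W z / z)"
          using b(2)[OF z True] z Wn[of z]
          by (simp add: mult_ac divide_right_mono mult_left_mono)
        then have "ennreal (exp (- (z * x)) * \<Phi> z * W z / z) \<le> ennreal ((lam + e) * (exp (- (z * x)) * W z / z))"
          by (rule ennreal_leI)
        also have "\<dots> = ennreal (lam + e) * hh x z"
          using z lam e ennreal_mult'[of "lam + e" "exp (- (z * x)) * W z / z"] by (simp add: hh_def W0_eq del: ennreal_plus)
        finally have "ennreal (exp (- (z * x)) * \<Phi> z * W z / z) \<le> ennreal (lam + e) * hh x z" .
        then show ?thesis using z by (simp add: add_increasing2)
      next
        case False
        then have zb: "z \<ge> b" by simp
        have z0: "z \<ge> 0" using z by simp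
        have Wz: "W z \<le> exp (z + 1) / S 1" by (rule W_exp_bound[OF W Spos z0])
        have Pz: "\<Phi> z \<le> C * exp z" by (rule Phi_up[OF z0])
        have "exp (- (z * x)) * \<Phi> z * W z / z \<le> exp (- (z * x)) * (C * exp z) * (exp (z + 1) / S 1) / b"
        proof -
          have "exp (- (z * x)) * \<Phi> z * W z \<le> exp (- (z * x)) * (C * exp z) * (exp (z + 1) / S 1)"
            using Wz Pz Wn[of z] Phi_low[of z] lam z C
            by (intro mult_mono) auto
          moreover have "0 \<le> exp (- (z * x)) * \<Phi> z * W z"
            using Wn[of z] Phi_low[of z] lam z by simp
          ultimately show ?thesis using zb b(1) z
            by (meson frac_le order_trans divide_right_mono)
        qed
        also have "\<dots> = C / (S 1 * b) * (exp (- (z * x)) * exp z * exp (z + 1))"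
          by (simp add: field_simps)
        also have "exp (- (z * x)) * exp z * exp (z + 1) = exp 1 * exp (- ((x - 2) * z))"
          by (simp only: exp_add[symmetric]) (simp add: algebra_simps)
        also have "C / (S 1 * b) * (exp 1 * exp (- ((x - 2) * z))) = M * exp (- ((x - 2) * z))"
          unfolding M_def by (simp add: field_simps)
        finally have "ennreal (exp (- (z * x)) * \<Phi> z * W z / z) \<le> ennreal (M * exp (- ((x - 2) * z)))"
          by (rule ennreal_leI)
        then show ?thesis using zb z by (simp add: add_increasing)
      qed
    qed simp
    have "theta_integral \<Phi> W x \<le> ennreal x * (\<integral>\<^sup>+ z. ennreal (lam + e) * hh x z + ennreal (M * exp (- ((x - 2) * z))) * indicator {b..} z \<partial>lborel)"
      unfolding theta_integral_def by (intro mult_left_mono nn_integral_mono bound) simp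
    also have "(\<integral>\<^sup>+ z. ennreal (lam + e) * hh x z + ennreal (M * exp (- ((x - 2) * z))) * indicator {b..} z \<partial>lborel)
        = ennreal (lam + e) * JJ x + ennreal M * ennreal (exp (- ((x - 2) * b)) / (x - 2))"
    proof -
      have "(\<integral>\<^sup>+ z. ennreal (lam + e) * hh x z + ennreal (M * exp (- ((x - 2) * z))) * indicator {b..} z \<partial>lborel)
          = (\<integral>\<^sup>+ z. ennreal (lam + e) * hh x z \<partial>lborel) + (\<integral>\<^sup>+ z. ennreal M * (ennreal (exp (- ((x - 2) * z))) * indicator {b..} z) \<partial>lborel)"
        using M by (subst nn_integral_add[symmetric]) (auto simp: ennreal_mult' mult_ac intro!: nn_integral_cong borel_measurable_times_ennreal hh_meas)
      also have "\<dots> = ennreal (lam + e) * JJ x + ennreal M * (\<integral>\<^sup>+ z\<in>{b..}. ennreal (exp (- ((x - 2) * z))) \<partial>lborel)"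
        using hh_int[of x] x by (simp add: nn_integral_cmult hh_meas)
      also have "(\<integral>\<^sup>+ z\<in>{b..}. ennreal (exp (- ((x - 2) * z))) \<partial>lborel) = ennreal (exp (- ((x - 2) * b)) / (x - 2))"
        by (rule nn_exp_tail) (use x in simp)
      finally show ?thesis .
    qed
    finally have "theta_integral \<Phi> W x \<le> ennreal x * (ennreal (lam + e) * JJ x + ennreal M * ennreal (exp (- ((x - 2) * b)) / (x - 2)))" .
    also have "\<dots> = ennreal (lam + e) * (ennreal x * JJ x) + ennreal (x * M * (exp (- ((x - 2) * b)) / (x - 2)))"
      using x M by (simp add: distrib_left ennreal_mult'[symmetric] mult_ac)
    finally show "theta_integral \<Phi> W x \<le> ennreal (lam + e) * (ennreal x * JJ x)
             + ennreal (x * (C * exp 1 / (S 1 * b)) * (exp (- ((x - 2) * b)) / (x - 2)))"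
      by (simp add: M_def)
  qed
qed

end

theorem proposition4p4:
  fixes \<mu> \<eta> :: "real measure" and gam lam ah d :: real and W :: "real \<Rightarrow> real"
  assumes pi_sets: "sets \<mu> = sets borel"
    and pi_levy: "(\<integral>\<^sup>+ u\<in>{0<..}. ennreal (min 1 (u\<^sup>2)) \<partial>\<mu>) < \<infinity>"
    and lam: "lam \<ge> 0"
    and eta_sets: "sets \<eta> = sets borel"
    and eta_int: "(\<integral>\<^sup>+ u\<in>{0<..}. ennreal (min u (u\<^sup>2)) \<partial>\<eta>) < \<infinity>"
    and ah: "ah \<ge> 0" and d: "d \<ge> 0"
    and Sigma_int: "(\<integral>\<^sup>+ u\<in>{1..}. inverse (ennreal (Sigma_fun ah d \<eta> u)) \<partial>lborel) < \<infinity>"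
    and W: "is_scale_function (Sigma_fun ah d \<eta>) W"
  shows "(lam > 0 \<longrightarrow>
            (ah > 0 \<longrightarrow> theta_upper (Phi_fun gam \<mu> lam) W = ennreal (lam / ah)
                       \<and> theta_lower (Phi_fun gam \<mu> lam) W = ennreal (lam / ah)) \<and>
            (ah = 0 \<longrightarrow> theta_upper (Phi_fun gam \<mu> lam) W = \<infinity>
                       \<and> theta_lower (Phi_fun gam \<mu> lam) W = \<infinity>))
       \<and> (lam = 0 \<and> ah > 0 \<longrightarrow>
            theta_upper (Phi_fun gam \<mu> lam) W = 0 \<and> theta_lower (Phi_fun gam \<mu> lam) W = 0)"
proof -
  let ?S = "Sigma_fun ah d \<eta>"
  let ?P = "Phi_fun gam \<mu> lam"
  let ?T = "theta_integral ?P W"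
  define C where "C = lam + measure \<mu> {1<..} + max gam 0"
  have Spos: "\<And>y. y > 0 \<Longrightarrow> ?S y > 0"
    by (rule Sigma_pos[OF eta_sets eta_int ah d Sigma_int])
  note PL = Phi_lower[OF pi_sets pi_levy lam]
  have PU: "\<And>z. z \<ge> 0 \<Longrightarrow> ?P z \<le> C * exp z"
    unfolding C_def by (rule Phi_upper[OF pi_sets pi_levy lam])
  note PN = Phi_near0[OF pi_sets pi_levy lam]
  note ctx = W Spos lam PL PU PN
  have JI: "JJ ?S x = II \<eta> ah d x" for x
    by (simp add: JJ_def[OF ctx] II_def[OF eta_sets eta_int ah d])
  have lowb: "\<forall>\<^sub>F x in at_top. ennreal lam * (ennreal x * II \<eta> ah d x) \<le> ?T x"
    using eventually_gt_at_top[of 0] by (rule eventually_mono) (use theta_lower_bd[OF ctx] JI in auto)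
  have ntriv: "\<not> trivial_limit (at_top :: real filter)" by simp
  have lim_pos: "(?T \<longlongrightarrow> ennreal (lam / ah)) at_top" if ahp: "ah > 0"
  proof -
    note Llim = LL_lim_pos[OF eta_sets eta_int ah d Sigma_int ahp]
    show ?thesis
    proof (rule order_tendstoI)
      fix a assume a: "a < ennreal (lam / ah)"
      have "((\<lambda>x. ennreal lam * (ennreal x * II \<eta> ah d x)) \<longlongrightarrow> ennreal lam * ennreal (1 / ah)) at_top"
        by (rule ennreal_tendsto_cmult[OF _ Llim]) simp
      moreover have "ennreal lam * ennreal (1 / ah) = ennreal (lam / ah)"
        using lam by (simp add: ennreal_mult'[symmetric])
      ultimately have "\<forall>\<^sub>F x in at_top. a < ennreal lam * (ennreal x * II \<eta> ah d x)"
        using a by (intro order_tendstoD) auto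
      with lowb show "\<forall>\<^sub>F x in at_top. a < ?T x"
        by eventually_elim (rule less_le_trans)
    next
      fix a assume a: "a > ennreal (lam / ah)"
      have "((\<lambda>e. ennreal ((lam + e) / ah)) \<longlongrightarrow> ennreal ((lam + 0) / ah)) (at_right 0)"
        using ahp by (intro tendsto_intros) auto
      then have "\<forall>\<^sub>F e in at_right 0. ennreal ((lam + e) / ah) < a"
        using a by (intro order_tendstoD) auto
      then obtain b0 where b0: "b0 > 0" "\<And>e. 0 < e \<Longrightarrow> e < b0 \<Longrightarrow> ennreal ((lam + e) / ah) < a"
        by (auto simp: eventually_at_right_field)
      define e where "e = b0 / 2"
      have e: "e > 0" "ennreal ((lam + e) / ah) < a" using b0 by (auto simp: e_def)
      obtain b where b: "b > 0" and ub: "\<And>x. x > 2 \<Longrightarrow> ?T x \<le> ennreal (lam + e) * (ennreal x * JJ ?S x)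
             + ennreal (x * (C * exp 1 / (?S 1 * b)) * (exp (- ((x - 2) * b)) / (x - 2)))"
        using theta_upper_bd[OF ctx e(1)] by blast
      define K where "K = C * exp 1 / (?S 1 * b)"
      have tl: "((\<lambda>x. x * K * (exp (- ((x - 2) * b)) / (x - 2))) \<longlongrightarrow> 0) at_top"
      proof -
        have "((\<lambda>x. x * (exp (- ((x - 2) * b)) / (x - 2))) \<longlongrightarrow> 0) at_top"
          using b by real_asymp
        then have "((\<lambda>x. K * (x * (exp (- ((x - 2) * b)) / (x - 2)))) \<longlongrightarrow> K * 0) at_top"
          by (intro tendsto_intros)
        then show ?thesis by (simp add: mult_ac)
      qed
      have "((\<lambda>x. ennreal (lam + e) * (ennreal x * II \<eta> ah d x) + ennreal (x * K * (exp (- ((x - 2) * b)) / (x - 2))))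
            \<longlongrightarrow> ennreal (lam + e) * ennreal (1 / ah) + ennreal 0) at_top"
        by (intro tendsto_add ennreal_tendsto_cmult Llim tendsto_ennrealI tl) simp
      moreover have "ennreal (lam + e) * ennreal (1 / ah) + ennreal 0 = ennreal ((lam + e) / ah)"
        using lam e by (simp add: ennreal_mult'[symmetric] del: ennreal_plus)
      ultimately have "\<forall>\<^sub>F x in at_top. ennreal (lam + e) * (ennreal x * II \<eta> ah d x) + ennreal (x * K * (exp (- ((x - 2) * b)) / (x - 2))) < a"
        using e by (intro order_tendstoD) auto
      moreover have "\<forall>\<^sub>F x in at_top. (x::real) > 2" by (rule eventually_gt_at_top)
      ultimately show "\<forall>\<^sub>F x in at_top. ?T x < a"
      proof eventually_elim
        case (elim x)
        then show ?case using ub[of x] JI[of x] unfolding K_def by (auto intro: le_less_trans)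
      qed
    qed
  qed
  have lim_zero: "(?T \<longlongrightarrow> \<infinity>) at_top" if ah0: "ah = 0" and lp: "lam > 0"
  proof (rule order_tendstoI)
    fix a :: ennreal assume a: "a < \<infinity>"
    note Llim = LL_lim_zero[OF eta_sets eta_int ah d Sigma_int ah0]
    have "((\<lambda>x. ennreal lam * (ennreal x * II \<eta> ah d x)) \<longlongrightarrow> ennreal lam * \<infinity>) at_top"
      by (rule ennreal_tendsto_cmult[OF _ Llim]) simp
    moreover have "ennreal lam * \<infinity> = \<infinity>" using lp by simp
    ultimately have "\<forall>\<^sub>F x in at_top. a < ennreal lam * (ennreal x * II \<eta> ah d x)"
      using a by (intro order_tendstoD) auto
    with lowb show "\<forall>\<^sub>F x in at_top. a < ?T x"
      by eventually_elim (rule less_le_trans)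
  qed auto
  show ?thesis
    unfolding theta_upper_def theta_lower_def
    using lim_imp_Limsup[OF ntriv lim_pos] lim_imp_Liminf[OF ntriv lim_pos]
      lim_imp_Limsup[OF ntriv lim_zero] lim_imp_Liminf[OF ntriv lim_zero]
    by auto
qed


end
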